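(* Suppose Assumptions A1 and A2 hold, let $\alpha>0$, and let $(x(t),y(t))$, $t\ge0$, be the solution of (SGF). For $\beta,c>0$ define $$\mathcal{E}(t)=f(x(t),y(t))-f^\star+\beta\|\nabla_y g(x(t),y(t))\|+c\int_0^t\|F(x(\tau),y(\tau))\|^2\,d\tau .$$ Then: (1) $\|\nabla_y g(x(t),y(t))\|=e^{-\alpha t}\|\nabla_y g(x(0),y(0))\|$ for all $t\ge0$; (2) there exist $\beta,c>0$ such that $\dot{\mathcal{E}}(t)\le0$ for all $t\ge0$, and in particular, for all $t>0$, $$\frac1t\int_0^t\|\nabla\ell(x(\tau))\|^2d\tau\le\frac{2\mathcal{E}(0)}{ct}+\frac{1-e^{-2\alpha t}}{\alpha t}\,\frac{M_1^2}{\mu_g^2}\|\nabla_y g(x(0),y(0))\|^2,$$ where $M_1$ is the constant of Lemma 1.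
   Context: $f,g:\mathbb{R}^n\times\mathbb{R}^m\to\mathbb{R}$; $\nabla^2_{yx}g(x,y)\in\mathbb{R}^{m\times n}$ is the Jacobian with respect to $x$ of $\nabla_y g(x,y)$, $\nabla^2_{yy}g$ the Hessian in $y$. Assumption A1: $f$ is continuously differentiable; $\|\nabla_x f(x,y)\|\le C^f_x$, $\|\nabla_y f(x,y)\|\le C^f_y$ for all $(x,y)$; $\nabla_x f,\nabla_y f$ are Lipschitz on $\mathbb{R}^n\times\mathbb{R}^m$. Assumption A2: $g$ is twice continuously differentiable; $g(x,\cdot)$ is $\mu_g$-strongly convex for each $x$; $\nabla_y g(x,\cdot)$ is $L^g_{yy}$-Lipschitz for each $x$ and $\nabla_y g(\cdot,y)$ is $L^g_{yx}$-Lipschitz for each $y$; $\nabla^2_{yx}g$, $\nabla^2_{yy}g$ are Lipschitz on $\mathbb{R}^n\times\mathbb{R}^m$. $y^\star(x):=\arg\min_y g(x,y)$, $\ell(x):=f(x,y^\star(x))$, and $F(x,y):=\nabla_x f(x,y)-\nabla^2_{yx}g(x,y)^\top[\nabla^2_{yy}g(x,y)]^{-1}\nabla_y f(x,y)$. $M_1>0$ is a constant with $\|\nabla\ell(x)-F(x,y)\|\le M_1\|y-y^\star(x)\|$ for all $x,y$. $f^\star$ is the global optimal value of $\min_{x,y}f(x,y)$ subject to $\nabla_y g(x,y)=0$. Safe gradient flow (SGF): $\dot x=-\nabla_x f(x,y)-\nabla^2_{yx}g(x,y)^\top\lambda(x,y)$, $\dot y=-\nabla_y f(x,y)-\nabla^2_{yy}g(x,y)^\top\lambda(x,y)$,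 with $\lambda=-\big(\nabla^2_{yx}g\,\nabla^2_{yx}g^\top+(\nabla^2_{yy}g)^2\big)^{-1}\big(\nabla^2_{yx}g\,\nabla_x f+\nabla^2_{yy}g\,\nabla_y f-\alpha\nabla_y g\big)$ (all at $(x,y)$); equivalently $(\dot x,\dot y)$ is the minimizer of $\tfrac12\|\dot x_d+\nabla_x f\|^2+\tfrac12\|\dot y_d+\nabla_y f\|^2$ subject to $\nabla^2_{yx}g\,\dot x_d+\nabla^2_{yy}g\,\dot y_d+\alpha\nabla_y g=0$. *)

theory Defs
  imports "HOL-Analysis.Analysis"
begin

definition grad :: "(real^'n \<Rightarrow> real) \<Rightarrow> real^'n \<Rightarrow> real^'n" where
  "grad h x = (\<chi> i. frechet_derivative h (at x) (axis i 1))"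

definition ystar :: "(real^'n \<Rightarrow> real^'m \<Rightarrow> real) \<Rightarrow> real^'n \<Rightarrow> real^'m" where
  "ystar g x = (THE y. \<forall>z. g x y \<le> g x z)"

definition strongly_convex_y :: "real \<Rightarrow> (real^'n \<Rightarrow> real^'m \<Rightarrow> real) \<Rightarrow> bool" where
  "strongly_convex_y mu g \<longleftrightarrow> mu > 0 \<and> (\<forall>x y z t. 0 \<le> t \<and> t \<le> 1 \<longrightarrow>
     g x ((1 - t) *\<^sub>R y + t *\<^sub>R z) \<le> (1 - t) * g x y + t * g x z - mu / 2 * t * (1 - t) * (norm (y - z))\<^sup>2)"

text \<open>F(x,y) = grad_x f - (grad^2_yx g)^T (grad^2_yy g)^{-1} grad_y f.
  Hyx x y :: real^'n^'m is the m x n matrix grad^2_yx g(x,y).\<close>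
definition Fmap ::
  "(real^'n \<Rightarrow> real^'m \<Rightarrow> real^'n) \<Rightarrow> (real^'n \<Rightarrow> real^'m \<Rightarrow> real^'m) \<Rightarrow>
   (real^'n \<Rightarrow> real^'m \<Rightarrow> real^'n^'m) \<Rightarrow> (real^'n \<Rightarrow> real^'m \<Rightarrow> real^'m^'m) \<Rightarrow>
   real^'n \<Rightarrow> real^'m \<Rightarrow> real^'n" where
  "Fmap fx fy Hyx Hyy x y =
     fx x y - transpose (Hyx x y) *v (matrix_inv (Hyy x y) *v fy x y)"

definition sgf_lambda ::
  "real \<Rightarrow> (real^'n \<Rightarrow> real^'m \<Rightarrow> real^'n) \<Rightarrow> (real^'n \<Rightarrow> real^'m \<Rightarrow> real^'m) \<Rightarrow>
   (real^'n \<Rightarrow> real^'m \<Rightarrow> real^'m) \<Rightarrow>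
   (real^'n \<Rightarrow> real^'m \<Rightarrow> real^'n^'m) \<Rightarrow> (real^'n \<Rightarrow> real^'m \<Rightarrow> real^'m^'m) \<Rightarrow>
   real^'n \<Rightarrow> real^'m \<Rightarrow> real^'m" where
  "sgf_lambda \<alpha> fx fy gy Hyx Hyy x y =
     - (matrix_inv (Hyx x y ** transpose (Hyx x y) + Hyy x y ** Hyy x y) *v
        (Hyx x y *v fx x y + Hyy x y *v fy x y - \<alpha> *\<^sub>R gy x y))"

end

theory Submission
  imports Defs
begin



lemma right_quot_le:
  fixes \<phi> R :: "real \<Rightarrow> real"
  assumes "(\<phi> has_real_derivative D) (at 0)"
    and "\<And>t. 0 < t \<Longrightarrow> t < 1 \<Longrightarrow> (\<phi> t - \<phi> 0) / t \<le> R t"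
    and "(R \<longlongrightarrow> R0) (at_right 0)"
  shows "D \<le> R0"
proof -
  have "((\<lambda>h. (\<phi> (0 + h) - \<phi> 0) / h) \<longlongrightarrow> D) (at 0)" using assms(1) by (simp add: DERIV_def)
  then have "((\<lambda>h. (\<phi> h - \<phi> 0) / h) \<longlongrightarrow> D) (at_right 0)"
    by (auto intro: tendsto_mono[OF at_le])
  moreover have "\<forall>\<^sub>F t in at_right 0. (\<phi> t - \<phi> 0) / t \<le> R t"
    unfolding eventually_at_right[OF zero_less_one] using assms(2) by (intro exI[of _ 1]) auto
  ultimately show ?thesis using tendsto_le[OF trivial_limit_at_right_real assms(3)] by blast
qed

lemma right_quot_ge:
  fixes \<phi> R :: "real \<Rightarrow> real"
  assumes "(\<phi> has_real_derivative D) (at 0)"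
    and "\<And>t. 0 < t \<Longrightarrow> t < 1 \<Longrightarrow> R t \<le> (\<phi> t - \<phi> 0) / t"
    and "(R \<longlongrightarrow> R0) (at_right 0)"
  shows "R0 \<le> D"
proof -
  have "- D \<le> - R0"
  proof (rule right_quot_le[of "\<lambda>t. - \<phi> t" "- D" "\<lambda>t. - R t"])
    show "((\<lambda>t. - \<phi> t) has_real_derivative - D) (at 0)" using assms(1) by (rule DERIV_minus)
    show "(- \<phi> t - - \<phi> 0) / t \<le> - R t" if "0 < t" "t < 1" for t
    proof -
      have "(- \<phi> t - - \<phi> 0) / t = - ((\<phi> t - \<phi> 0) / t)" by (simp add: minus_divide_left)
      then show ?thesis using assms(2)[OF that] by linarith
    qed
    show "((\<lambda>t. - R t) \<longlongrightarrow> - R0) (at_right 0)" using assms(3) by (rule tendsto_minus)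
  qed
  then show ?thesis by simp
qed


declare transpose_matrix_vector[simp del]

lemma mv_minus[simp]: "(A::real^'a^'b) *v (- x) = - (A *v x)"
  by (simp add: matrix_vector_mult_def vec_eq_iff sum_negf)

lemma mv_inv:
  fixes A :: "real^'k^'k"
  assumes "invertible A" shows "A *v (matrix_inv A *v z) = z"
proof -
  have "A ** matrix_inv A = mat 1"
    using assms unfolding invertible_def matrix_inv_def by (rule someI2_ex) auto
  then show ?thesis by (simp add: matrix_vector_mul_assoc)
qed

lemma inv_of_ker:
  fixes A :: "real^'k^'k"
  assumes "\<And>z. A *v z = 0 \<Longrightarrow> z = 0" shows "invertible A"
  using assms invertible_left_inverse matrix_left_invertible_ker by blast

lemma tr_inner: "(transpose A *v x) \<bullet> y = x \<bullet> ((A::real^'a^'b) *v y)"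
  by (simp add: dot_lmul_matrix transpose_matrix_vector)

locale sgf =
  fixes f g :: "real^'n \<Rightarrow> real^'m \<Rightarrow> real"
    and fx gx :: "real^'n \<Rightarrow> real^'m \<Rightarrow> real^'n"
    and fy gy :: "real^'n \<Rightarrow> real^'m \<Rightarrow> real^'m"
    and Hxx :: "real^'n \<Rightarrow> real^'m \<Rightarrow> real^'n^'n"
    and Hxy :: "real^'n \<Rightarrow> real^'m \<Rightarrow> real^'m^'n"
    and Hyx :: "real^'n \<Rightarrow> real^'m \<Rightarrow> real^'n^'m"
    and Hyy :: "real^'n \<Rightarrow> real^'m \<Rightarrow> real^'m^'m"
    and Cfx Cfy mu_g Lyy Lyx :: real
  assumes
    f_deriv: "\<And>a b. ((\<lambda>p. f (fst p) (snd p)) has_derivative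
                 (\<lambda>h. fx a b \<bullet> fst h + fy a b \<bullet> snd h)) (at (a, b))"
    and fx_bound: "\<And>a b. norm (fx a b) \<le> Cfx"
    and fy_bound: "\<And>a b. norm (fy a b) \<le> Cfy"
    and fx_lip: "\<exists>L. L-lipschitz_on UNIV (\<lambda>p. fx (fst p) (snd p))"
    and fy_lip: "\<exists>L. L-lipschitz_on UNIV (\<lambda>p. fy (fst p) (snd p))"
    and g_deriv: "\<And>a b. ((\<lambda>p. g (fst p) (snd p)) has_derivative
                 (\<lambda>h. gx a b \<bullet> fst h + gy a b \<bullet> snd h)) (at (a, b))"
    and gy_deriv: "\<And>a b. ((\<lambda>p. gy (fst p) (snd p)) has_derivative
                 (\<lambda>h. Hyx a b *v fst h + Hyy a b *v snd h)) (at (a, b))"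
    and Hyy_cont: "continuous_on UNIV (\<lambda>p. Hyy (fst p) (snd p))"
    and g_sc: "strongly_convex_y mu_g g"
    and gy_lip_x: "\<And>b. Lyx-lipschitz_on UNIV (\<lambda>a. gy a b)"
begin

lemma mu_pos: "mu_g > 0" using g_sc unfolding strongly_convex_y_def by auto

lemma pair_deriv: "((\<lambda>b::real^'m. (a::real^'n, b)) has_derivative (\<lambda>k. (0, k))) (at x within s)"
  by (intro has_derivative_Pair has_derivative_const has_derivative_ident)
lemma pair_deriv_x: "((\<lambda>a::real^'n. (a, b::real^'m)) has_derivative (\<lambda>k. (k, 0))) (at x within s)"
  by (intro has_derivative_Pair has_derivative_const has_derivative_ident)

lemma g_y_deriv: "((g a) has_derivative (\<lambda>k. gy a b \<bullet> k)) (at b)"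
  using has_derivative_compose[OF pair_deriv g_deriv[of a b]] by simp

lemma f_y_deriv: "((f a) has_derivative (\<lambda>k. fy a b \<bullet> k)) (at b)"
  using has_derivative_compose[OF pair_deriv f_deriv[of a b]] by simp

lemma gy_y_deriv: "((gy a) has_derivative (\<lambda>k. Hyy a b *v k)) (at b)"
  using has_derivative_compose[OF pair_deriv gy_deriv[of a b]] by simp

lemma gy_x_deriv: "((\<lambda>a. gy a b) has_derivative (\<lambda>k. Hyx a b *v k)) (at a)"
  using has_derivative_compose[OF pair_deriv_x gy_deriv[of a b]] by simp

lemma line_DERIV_g: "((\<lambda>t. g a (p + t *\<^sub>R w)) has_real_derivative (gy a (p + t *\<^sub>R w) \<bullet> w)) (at t)"
proof -
  have "((\<lambda>t. p + t *\<^sub>R w) has_derivative (\<lambda>h. h *\<^sub>R w)) (at t)"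
    by (auto intro!: derivative_eq_intros)
  from has_derivative_compose[OF this g_y_deriv[of a "p + t *\<^sub>R w"]]
  show ?thesis unfolding has_field_derivative_def
    by (rule has_derivative_eq_rhs) (auto simp: fun_eq_iff mult.commute)
qed

lemma line_DERIV_gy: "((\<lambda>t. gy a (p + t *\<^sub>R w) \<bullet> z) has_real_derivative ((Hyy a (p + t *\<^sub>R w) *v w) \<bullet> z)) (at t)"
proof -
  have "((\<lambda>t. p + t *\<^sub>R w) has_derivative (\<lambda>h. h *\<^sub>R w)) (at t)"
    by (auto intro!: derivative_eq_intros)
  from has_derivative_compose[OF this gy_y_deriv[of a "p + t *\<^sub>R w"]]
  have "((\<lambda>t. gy a (p + t *\<^sub>R w)) has_derivative (\<lambda>h. Hyy a (p + t *\<^sub>R w) *v (h *\<^sub>R w))) (at t)" .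
  then have "((\<lambda>t. gy a (p + t *\<^sub>R w) \<bullet> z) has_derivative (\<lambda>h. (Hyy a (p + t *\<^sub>R w) *v (h *\<^sub>R w)) \<bullet> z)) (at t)"
    by (auto intro!: derivative_eq_intros)
  then show ?thesis unfolding has_field_derivative_def
    by (rule has_derivative_eq_rhs) (auto simp: fun_eq_iff matrix_vector_mult_scaleR mult.commute)
qed

lemma cont_mv2: "continuous_on S M \<Longrightarrow> continuous_on S v \<Longrightarrow> continuous_on S (\<lambda>z. M z *v (v z::real^'a))"
  for M :: "'c::topological_space \<Rightarrow> real^'a^'b"
proof -
  assume M: "continuous_on S M" and v: "continuous_on S v"
  have eq: "(\<lambda>z. M z *v v z) = (\<lambda>z. \<chi> k. (M z $ k) \<bullet> v z)"
    by (simp add: fun_eq_iff vec_eq_iff matrix_vector_mul_component)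
  have "continuous_on S (\<lambda>z. \<chi> k. (M z $ k) \<bullet> v z)"
    using M v by (auto intro!: continuous_on_vec_lambda continuous_intros)
  then show ?thesis unfolding eq .
qed

lemma cont_tr: "continuous_on S M \<Longrightarrow> continuous_on S (\<lambda>z. transpose (M z))"
  for M :: "'c::topological_space \<Rightarrow> real^'a^'b"
  unfolding transpose_def by (auto intro!: continuous_on_vec_lambda continuous_intros)

lemma cont_mv: "continuous_on S M \<Longrightarrow> continuous_on S (\<lambda>z. M z *v (v::real^'a))"
  for M :: "'c::topological_space \<Rightarrow> real^'a^'b"
proof -
  assume M: "continuous_on S M"
  have eq: "(\<lambda>z. M z *v v) = (\<lambda>z. \<chi> k. (M z $ k) \<bullet> v)"
    by (simp add: fun_eq_iff vec_eq_iff matrix_vector_mul_component)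
 have "continuous_on S (\<lambda>z. \<chi> k. (M z $ k) \<bullet> v)"
    using M by (auto intro!: continuous_on_vec_lambda continuous_intros)
  then show ?thesis unfolding eq .
qed

lemma Hyy_cont_y: "continuous_on UNIV (\<lambda>z. Hyy a z)"
proof -
  have "continuous_on UNIV (\<lambda>z::real^'m. (a, z))" by (intro continuous_intros)
  from continuous_on_compose2[OF Hyy_cont this] show ?thesis by simp
qed

lemma Delta:
  assumes "s > 0"
  obtains z where "norm (z - b) \<le> s * (norm u + norm v)" and
   "g a ((b + s *\<^sub>R u) + s *\<^sub>R v) - g a (b + s *\<^sub>R u) - g a (b + s *\<^sub>R v) + g a b = s^2 * ((Hyy a z *v v) \<bullet> u)"
proof -
  define P where "P r = g a ((b + s *\<^sub>R v) + r *\<^sub>R u) - g a (b + r *\<^sub>R u)" for r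
  have dP: "(P has_real_derivative (gy a ((b + s *\<^sub>R v) + r *\<^sub>R u) \<bullet> u - gy a (b + r *\<^sub>R u) \<bullet> u)) (at r)" for r
    unfolding P_def[abs_def] by (intro DERIV_diff line_DERIV_g)
  obtain r1 where r1: "0 < r1" "r1 < s" "P s - P 0 = (s - 0) * (gy a ((b + s *\<^sub>R v) + r1 *\<^sub>R u) \<bullet> u - gy a (b + r1 *\<^sub>R u) \<bullet> u)"
    using MVT2[OF assms, of P "\<lambda>r. gy a ((b + s *\<^sub>R v) + r *\<^sub>R u) \<bullet> u - gy a (b + r *\<^sub>R u) \<bullet> u"] dP by blast
  define Q where "Q t = gy a ((b + r1 *\<^sub>R u) + t *\<^sub>R v) \<bullet> u" for t
  have dQ: "(Q has_real_derivative ((Hyy a ((b + r1 *\<^sub>R u) + t *\<^sub>R v) *v v) \<bullet> u)) (at t)" for t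
    unfolding Q_def[abs_def] by (rule line_DERIV_gy)
  obtain t1 where t1: "0<t1" "t1<s" "Q s - Q 0 = (s-0) * ((Hyy a ((b + r1 *\<^sub>R u) + t1 *\<^sub>R v) *v v) \<bullet> u)"
    using MVT2[OF assms, of Q "\<lambda>t. (Hyy a ((b + r1 *\<^sub>R u) + t *\<^sub>R v) *v v) \<bullet> u"] dQ by blast
  have e1: "(b + s *\<^sub>R v) + r1 *\<^sub>R u = (b + r1 *\<^sub>R u) + s *\<^sub>R v" by (simp add: algebra_simps)
  have e2: "(b + s *\<^sub>R u) + s *\<^sub>R v = (b + s *\<^sub>R v) + s *\<^sub>R u" by (simp add: algebra_simps)
  show ?thesis
  proof (rule that[of "(b + r1 *\<^sub>R u) + t1 *\<^sub>R v"])
    have "norm (((b + r1 *\<^sub>R u) + t1 *\<^sub>R v) - b) = norm (r1 *\<^sub>R u + t1 *\<^sub>R v)" by simp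
    also have "\<dots> \<le> norm (r1 *\<^sub>R u) + norm (t1 *\<^sub>R v)" by (rule norm_triangle_ineq)
    also have "\<dots> \<le> s * norm u + s * norm v" using r1 t1 by (auto intro!: add_mono mult_right_mono)
    finally show "norm (((b + r1 *\<^sub>R u) + t1 *\<^sub>R v) - b) \<le> s * (norm u + norm v)" by (simp add: algebra_simps)
    show "g a ((b + s *\<^sub>R u) + s *\<^sub>R v) - g a (b + s *\<^sub>R u) - g a (b + s *\<^sub>R v) + g a b = s^2 * ((Hyy a ((b + r1 *\<^sub>R u) + t1 *\<^sub>R v) *v v) \<bullet> u)"
      using r1(3) t1(3) unfolding P_def Q_def e1 e2 by (simp add: power2_eq_square algebra_simps)
  qed
qed

lemma Hyy_inner_sym: "(Hyy a b *v v) \<bullet> u = (Hyy a b *v u) \<bullet> v"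
proof (rule ccontr)
  define \<psi>1 where "\<psi>1 z = (Hyy a z *v v) \<bullet> u" for z
  define \<psi>2 where "\<psi>2 z = (Hyy a z *v u) \<bullet> v" for z
  have c1: "continuous_on UNIV \<psi>1" unfolding \<psi>1_def
    by (intro continuous_intros cont_mv Hyy_cont_y)
  have c2: "continuous_on UNIV \<psi>2" unfolding \<psi>2_def
    by (intro continuous_intros cont_mv Hyy_cont_y)
  assume ne: "(Hyy a b *v v) \<bullet> u \<noteq> (Hyy a b *v u) \<bullet> v"
  define e where "e = \<bar>\<psi>1 b - \<psi>2 b\<bar> / 3"
  have e: "e > 0" using ne unfolding e_def \<psi>1_def \<psi>2_def by auto
  obtain d1 where d1: "d1 > 0" "\<And>z. dist z b < d1 \<Longrightarrow> dist (\<psi>1 z) (\<psi>1 b) < e"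
    using c1 e unfolding continuous_on_iff by (meson UNIV_I)
  obtain d2 where d2: "d2 > 0" "\<And>z. dist z b < d2 \<Longrightarrow> dist (\<psi>2 z) (\<psi>2 b) < e"
    using c2 e unfolding continuous_on_iff by (meson UNIV_I)
  define s where "s = min d1 d2 / (2 * (norm u + norm v + 1))"
  have s: "s > 0" unfolding s_def using d1 d2 by (auto intro!: divide_pos_pos add_nonneg_pos)
  have sb: "s * (norm u + norm v) < min d1 d2"
  proof -
    have "s * (norm u + norm v) \<le> s * (norm u + norm v + 1)" using s by simp
    also have "\<dots> = min d1 d2 / 2"
    proof -
      have "norm u + norm v + 1 > 0" by (simp add: add_nonneg_pos)
      then show ?thesis unfolding s_def by (simp add: field_simps)
    qed
    also have "\<dots> < min d1 d2" using d1(1) d2(1) by (auto simp: min_def)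
    finally show ?thesis .
  qed
  obtain z1 where z1: "norm (z1 - b) \<le> s * (norm u + norm v)"
    "g a ((b + s *\<^sub>R u) + s *\<^sub>R v) - g a (b + s *\<^sub>R u) - g a (b + s *\<^sub>R v) + g a b = s^2 * \<psi>1 z1"
    using Delta[OF s, of b u v a] unfolding \<psi>1_def by blast
  obtain z2 where z2: "norm (z2 - b) \<le> s * (norm v + norm u)"
    "g a ((b + s *\<^sub>R v) + s *\<^sub>R u) - g a (b + s *\<^sub>R v) - g a (b + s *\<^sub>R u) + g a b = s^2 * \<psi>2 z2"
    using Delta[OF s, of b v u a] unfolding \<psi>2_def by blast
  have e2: "(b + s *\<^sub>R u) + s *\<^sub>R v = (b + s *\<^sub>R v) + s *\<^sub>R u" by (simp add: algebra_simps)
  have "s^2 * \<psi>1 z1 = s^2 * \<psi>2 z2" using z1(2) z2(2) unfolding e2 by linarith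
  then have eq: "\<psi>1 z1 = \<psi>2 z2" using s by simp
  have "dist z1 b < d1" using z1(1) sb by (simp add: dist_norm)
  then have h1: "\<bar>\<psi>1 z1 - \<psi>1 b\<bar> < e" using d1(2) by (simp add: dist_real_def)
  have "dist z2 b < d2" using z2(1) sb by (simp add: dist_norm add.commute)
  then have h2: "\<bar>\<psi>2 z2 - \<psi>2 b\<bar> < e" using d2(2) by (simp add: dist_real_def)
  show False using h1 h2 eq e_def e unfolding abs_less_iff by (auto simp: abs_if split: if_split_asm)
qed

lemma Hyy_sym: "transpose (Hyy a b) = Hyy a b"
proof -
  have "Hyy a b $ i $ j = Hyy a b $ j $ i" for i j
    using Hyy_inner_sym[of a b "axis j 1" "axis i 1"]
    by (simp add: inner_axis inner_axis' matrix_vector_mul_component)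
  then show ?thesis by (simp add: vec_eq_iff transpose_def)
qed

lemma sc_def: "0 \<le> t \<Longrightarrow> t \<le> 1 \<Longrightarrow> g x ((1 - t) *\<^sub>R y + t *\<^sub>R z) \<le> (1 - t) * g x y + t * g x z - mu_g / 2 * t * (1 - t) * (norm (y - z))\<^sup>2"
  using g_sc unfolding strongly_convex_y_def by blast

lemma sc_grad: "gy a y \<bullet> (z - y) \<le> g a z - g a y - mu_g/2 * (norm (z - y))^2"
proof (rule right_quot_le)
  show "((\<lambda>t. g a (y + t *\<^sub>R (z - y))) has_real_derivative gy a y \<bullet> (z - y)) (at 0)"
    using line_DERIV_g[of a y "z - y" 0] by simp
  show "(g a (y + t *\<^sub>R (z - y)) - g a (y + 0 *\<^sub>R (z - y))) / t
        \<le> g a z - g a y - mu_g / 2 * (1 - t) * (norm (z - y))^2" if "0 < t" "t < 1" for t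
  proof -
    have e: "(1 - t) *\<^sub>R y + t *\<^sub>R z = y + t *\<^sub>R (z - y)" by (simp add: algebra_simps)
    have "g a (y + t *\<^sub>R (z - y)) \<le> (1 - t) * g a y + t * g a z - mu_g / 2 * t * (1 - t) * (norm (z - y))\<^sup>2"
      using sc_def[of t a y z] that e by (simp add: norm_minus_commute)
    then have "g a (y + t *\<^sub>R (z - y)) - g a y \<le> t * (g a z - g a y - mu_g / 2 * (1 - t) * (norm (z - y))^2)"
      by (simp add: algebra_simps)
    then show ?thesis using that by (simp add: divide_le_eq mult.commute)
  qed
  show "((\<lambda>t. g a z - g a y - mu_g / 2 * (1 - t) * (norm (z - y))^2) \<longlongrightarrow> g a z - g a y - mu_g / 2 * (norm (z - y))^2) (at_right 0)"
    by (rule tendsto_eq_intros refl | simp)+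
qed

lemma sc_mono: "mu_g * (norm (z - y))^2 \<le> (gy a z - gy a y) \<bullet> (z - y)"
proof -
  have "gy a y \<bullet> (z - y) \<le> g a z - g a y - mu_g/2 * (norm (z - y))^2" by (rule sc_grad)
  moreover have "gy a z \<bullet> (y - z) \<le> g a y - g a z - mu_g/2 * (norm (y - z))^2" by (rule sc_grad)
  ultimately show ?thesis by (simp add: inner_diff_left inner_diff_right norm_minus_commute algebra_simps)
qed

lemma Hyy_pd: "mu_g * (norm v)^2 \<le> v \<bullet> (Hyy a b *v v)"
proof -
  have "mu_g * (norm v)^2 \<le> (Hyy a b *v v) \<bullet> v"
  proof (rule right_quot_ge)
    show "((\<lambda>t. gy a (b + t *\<^sub>R v) \<bullet> v) has_real_derivative (Hyy a b *v v) \<bullet> v) (at 0)"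
      using line_DERIV_gy[of a b v v 0] by simp
    show "mu_g * (norm v)^2 \<le> (gy a (b + t *\<^sub>R v) \<bullet> v - gy a (b + 0 *\<^sub>R v) \<bullet> v) / t" if "0 < t" "t < 1" for t
    proof -
      have "mu_g * (norm ((b + t *\<^sub>R v) - b))^2 \<le> (gy a (b + t *\<^sub>R v) - gy a b) \<bullet> ((b + t *\<^sub>R v) - b)"
        by (rule sc_mono)
      then have "t * (t * (mu_g * (norm v)^2)) \<le> t * ((gy a (b + t *\<^sub>R v) - gy a b) \<bullet> v)"
        using that by (simp add: power2_eq_square inner_diff_left algebra_simps)
      then have "t * (mu_g * (norm v)^2) \<le> (gy a (b + t *\<^sub>R v) - gy a b) \<bullet> v"
        using that by simp
      then show ?thesis using that by (simp add: le_divide_eq inner_diff_left mult.commute)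
    qed
  qed simp
  then show ?thesis by (simp add: inner_commute)
qed

lemma line_DERIV_gyx: "((\<lambda>t. gy (p + t *\<^sub>R w) b \<bullet> z) has_real_derivative ((Hyx (p + t *\<^sub>R w) b *v w) \<bullet> z)) (at t)"
proof -
  have "((\<lambda>t. p + t *\<^sub>R w) has_derivative (\<lambda>h. h *\<^sub>R w)) (at t)"
    by (auto intro!: derivative_eq_intros)
  from has_derivative_compose[OF this gy_x_deriv[of b "p + t *\<^sub>R w"]]
  have "((\<lambda>t. gy (p + t *\<^sub>R w) b) has_derivative (\<lambda>h. Hyx (p + t *\<^sub>R w) b *v (h *\<^sub>R w))) (at t)" .
  then have "((\<lambda>t. gy (p + t *\<^sub>R w) b \<bullet> z) has_derivative (\<lambda>h. (Hyx (p + t *\<^sub>R w) b *v (h *\<^sub>R w)) \<bullet> z)) (at t)"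
    by (auto intro!: derivative_eq_intros)
  then show ?thesis unfolding has_field_derivative_def
    by (rule has_derivative_eq_rhs) (auto simp: fun_eq_iff matrix_vector_mult_scaleR mult.commute)
qed

lemma Lyx_nonneg: "0 \<le> Lyx" using gy_lip_x[of 0] unfolding lipschitz_on_def by auto

lemma Hyx_bound: "norm (Hyx a b *v v) \<le> Lyx * norm v"
proof -
  let ?w = "Hyx a b *v v"
  have "(Hyx a b *v v) \<bullet> ?w \<le> Lyx * norm v * norm ?w"
  proof (rule right_quot_le)
    show "((\<lambda>t. gy (a + t *\<^sub>R v) b \<bullet> ?w) has_real_derivative (Hyx a b *v v) \<bullet> ?w) (at 0)"
      using line_DERIV_gyx[of a v b ?w 0] by simp
    show "(gy (a + t *\<^sub>R v) b \<bullet> ?w - gy (a + 0 *\<^sub>R v) b \<bullet> ?w) / t \<le> Lyx * norm v * norm ?w"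
      if "0 < t" "t < 1" for t
    proof -
      have "dist (gy (a + t *\<^sub>R v) b) (gy a b) \<le> Lyx * dist (a + t *\<^sub>R v) a"
        using gy_lip_x[of b] unfolding lipschitz_on_def by blast
      then have n: "norm (gy (a + t *\<^sub>R v) b - gy a b) \<le> Lyx * (t * norm v)"
        using that by (simp add: dist_norm)
      have "(gy (a + t *\<^sub>R v) b - gy a b) \<bullet> ?w \<le> norm (gy (a + t *\<^sub>R v) b - gy a b) * norm ?w"
        by (rule norm_cauchy_schwarz)
      also have "\<dots> \<le> Lyx * (t * norm v) * norm ?w" using n by (simp add: mult_right_mono)
      finally have "(gy (a + t *\<^sub>R v) b - gy a b) \<bullet> ?w \<le> t * (Lyx * norm v * norm ?w)"
        by (simp add: algebra_simps)
      then show ?thesis using that by (simp add: divide_le_eq inner_diff_left mult.commute)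
    qed
  qed simp
  then have "norm ?w * norm ?w \<le> (Lyx * norm v) * norm ?w" by (simp add: power2_eq_square[symmetric] dot_square_norm)
  then show ?thesis by (cases "norm ?w = 0") (auto simp: mult_le_cancel_right Lyx_nonneg)
qed

lemma g_cont: "continuous_on S (g a)"
  using g_y_deriv has_derivative_continuous
  by (metis continuous_at_imp_continuous_on has_derivative_at_withinI)

lemma min_grad0: assumes "\<forall>z. g a y \<le> g a z" shows "gy a y = 0"
proof -
  have "(\<lambda>k. gy a y \<bullet> k) = (\<lambda>h. 0)"
    by (rule has_derivative_local_min[OF g_y_deriv]) (use assms in auto)
  then have "gy a y \<bullet> gy a y = 0" by metis
  then show ?thesis by simp
qed

lemma min_exists: "\<exists>y. \<forall>z. g a y \<le> g a z"
proof -
  define G where "G = norm (gy a 0)"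
  define R where "R = 2 * G / mu_g + 1"
  have R: "R > 0" unfolding R_def G_def using mu_pos by (simp add: add_nonneg_pos)
  obtain ym where ym: "ym \<in> cball 0 R" "\<And>z. z \<in> cball 0 R \<Longrightarrow> g a ym \<le> g a z"
    using continuous_attains_inf[OF compact_cball _ g_cont, of 0 R a] R by auto
  have "g a ym \<le> g a z" for z
  proof (cases "z \<in> cball 0 R")
    case True then show ?thesis using ym by auto
  next
    case False
    then have nz: "norm z > R" by (simp add: dist_norm)
    have "gy a 0 \<bullet> (z - 0) \<le> g a z - g a 0 - mu_g/2 * (norm (z - 0))^2" by (rule sc_grad)
    moreover have "- G * norm z \<le> gy a 0 \<bullet> z" unfolding G_def
      using norm_cauchy_schwarz[of "- gy a 0" z] by simp
    ultimately have "g a 0 + (mu_g/2 * norm z - G) * norm z \<le> g a z"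
      by (simp add: power2_eq_square algebra_simps)
    moreover have "mu_g/2 * norm z - G > 0"
    proof -
      have "mu_g/2 * norm z > mu_g/2 * R" using nz mu_pos by simp
      moreover have "mu_g/2 * R = G + mu_g/2" unfolding R_def using mu_pos by (simp add: field_simps)
      ultimately show ?thesis using mu_pos by linarith
    qed
    ultimately have "g a 0 \<le> g a z" using nz R
      by (smt (verit, ccfv_SIG) mult_pos_pos)
    moreover have "g a ym \<le> g a 0" using ym R by auto
    ultimately show ?thesis by linarith
  qed
  then show ?thesis by blast
qed

lemma min_unique: assumes "\<forall>z. g a y1 \<le> g a z" "\<forall>z. g a y2 \<le> g a z" shows "y1 = y2"
proof -
  have "gy a y1 \<bullet> (y2 - y1) \<le> g a y2 - g a y1 - mu_g/2 * (norm (y2 - y1))^2" by (rule sc_grad)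
  then have "mu_g/2 * (norm (y2 - y1))^2 \<le> 0" using min_grad0[OF assms(1)] assms by (smt (verit) inner_zero_left)
  then have "(norm (y2 - y1))^2 \<le> 0" using mu_pos by (simp add: mult_le_0_iff)
  then show ?thesis by simp
qed

lemma ystar_min: "\<forall>z. g a (ystar g a) \<le> g a z"
proof -
  obtain ym where ym: "\<forall>z. g a ym \<le> g a z" using min_exists by blast
  have "ystar g a = ym" unfolding ystar_def
    by (rule the_equality) (use ym min_unique in blast)+
  then show ?thesis using ym by simp
qed

lemma gy_ystar: "gy a (ystar g a) = 0" using min_grad0 ystar_min by blast

lemma dist_ystar: "norm (b - ystar g a) \<le> norm (gy a b) / mu_g"
proof -
  let ?s = "ystar g a"
  have "mu_g * (norm (b - ?s))^2 \<le> (gy a b - gy a ?s) \<bullet> (b - ?s)" by (rule sc_mono)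
  also have "\<dots> = gy a b \<bullet> (b - ?s)" using gy_ystar by simp
  also have "\<dots> \<le> norm (gy a b) * norm (b - ?s)" by (rule norm_cauchy_schwarz)
  finally have "(mu_g * norm (b - ?s)) * norm (b - ?s) \<le> norm (gy a b) * norm (b - ?s)"
    by (simp add: power2_eq_square mult.assoc)
  then have "mu_g * norm (b - ?s) \<le> norm (gy a b)"
    by (cases "norm (b - ?s) = 0") (use mu_pos in \<open>auto simp: mult_le_cancel_right\<close>)
  then show ?thesis using mu_pos by (simp add: le_divide_eq mult.commute)
qed

lemma Cfy_nonneg: "0 \<le> Cfy" using fy_bound[of 0 0] norm_ge_zero order_trans by blast
lemma Cfx_nonneg: "0 \<le> Cfx" using fx_bound[of 0 0] norm_ge_zero order_trans by blast

lemma f_lip_y: "norm (f a b - f a c) \<le> Cfy * norm (b - c)"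
proof (rule differentiable_bound[of UNIV])
  show "(f a has_derivative (\<lambda>k. fy a z \<bullet> k)) (at z within UNIV)" for z using f_y_deriv by simp
  show "onorm (\<lambda>k. fy a z \<bullet> k) \<le> Cfy" for z
  proof (rule onorm_le)
    fix k
    have "norm (fy a z \<bullet> k) \<le> norm (fy a z) * norm k" by (simp add: Cauchy_Schwarz_ineq2)
    also have "\<dots> \<le> Cfy * norm k" using fy_bound by (simp add: mult_right_mono)
    finally show "norm (fy a z \<bullet> k) \<le> Cfy * norm k" .
  qed
qed auto

lemma f_lower:
  assumes "bdd_below {f a b | a b. gy a b = 0}"
  shows "Inf {f a b | a b. gy a b = 0} - Cfy / mu_g * norm (gy a b) \<le> f a b"
proof -
  let ?s = "ystar g a"
  have "Inf {f a b | a b. gy a b = 0} \<le> f a ?s"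
    by (rule cInf_lower[OF _ assms]) (use gy_ystar in blast)
  moreover have "f a ?s - f a b \<le> Cfy * norm (b - ?s)"
    using f_lip_y[of a ?s b] by (simp add: norm_minus_commute abs_le_iff)
  moreover have "Cfy * norm (b - ?s) \<le> Cfy * (norm (gy a b) / mu_g)"
    using mult_left_mono[OF dist_ystar Cfy_nonneg] by simp
  ultimately show ?thesis by (simp add: algebra_simps)
qed

lemma H_lower: "mu_g * norm v \<le> norm (Hyy a b *v v)"
proof -
  have "mu_g * (norm v)^2 \<le> v \<bullet> (Hyy a b *v v)" by (rule Hyy_pd)
  also have "\<dots> \<le> norm v * norm (Hyy a b *v v)" by (rule norm_cauchy_schwarz)
  finally have "(mu_g * norm v) * norm v \<le> norm (Hyy a b *v v) * norm v"
    by (simp add: power2_eq_square algebra_simps)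
  then show ?thesis by (cases "norm v = 0") (auto simp: mult_le_cancel_right)
qed

lemma H_inv: "invertible (Hyy a b)"
proof (rule inv_of_ker)
  fix z assume "Hyy a b *v z = 0"
  then have "mu_g * norm z \<le> 0" using H_lower[of z a b] by simp
  then show "z = 0" using mu_pos by (simp add: mult_le_0_iff)
qed

lemma Hinv_bound: "norm (matrix_inv (Hyy a b) *v z) \<le> norm z / mu_g"
  using H_lower[of "matrix_inv (Hyy a b) *v z" a b] mv_inv[OF H_inv] mu_pos
  by (simp add: le_divide_eq mult.commute)

lemma Hyy_tr: "(Hyy a b *v p) \<bullet> q = p \<bullet> (Hyy a b *v q)"
  using tr_inner[of "Hyy a b" p q] Hyy_sym[of a b] by (simp add: inner_commute)

lemma Hinv_sym: "(matrix_inv (Hyy a b) *v p) \<bullet> q = p \<bullet> (matrix_inv (Hyy a b) *v q)"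
proof -
  let ?H = "Hyy a b" and ?I = "matrix_inv (Hyy a b)"
  have "p \<bullet> (?I *v q) = (?H *v (?I *v p)) \<bullet> (?I *v q)" using mv_inv[OF H_inv] by simp
  also have "\<dots> = (?I *v p) \<bullet> (?H *v (?I *v q))" by (rule Hyy_tr)
  also have "\<dots> = (?I *v p) \<bullet> q" using mv_inv[OF H_inv] by simp
  finally show ?thesis by simp
qed

definition Mm where "Mm a b = Hyx a b ** transpose (Hyx a b) + Hyy a b ** Hyy a b"

lemma M_quad: "z \<bullet> (Mm a b *v z) = (norm (transpose (Hyx a b) *v z))^2 + (norm (Hyy a b *v z))^2"
proof -
  have "z \<bullet> (Mm a b *v z) = z \<bullet> (Hyx a b *v (transpose (Hyx a b) *v z)) + z \<bullet> (Hyy a b *v (Hyy a b *v z))"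
    unfolding Mm_def by (simp add: matrix_vector_mult_add_rdistrib matrix_vector_mul_assoc[symmetric] inner_add_right)
  also have "z \<bullet> (Hyx a b *v (transpose (Hyx a b) *v z)) = (transpose (Hyx a b) *v z) \<bullet> (transpose (Hyx a b) *v z)"
    using tr_inner[of "Hyx a b" z "transpose (Hyx a b) *v z"] by simp
  also have "z \<bullet> (Hyy a b *v (Hyy a b *v z)) = (Hyy a b *v z) \<bullet> (Hyy a b *v z)"
    using Hyy_tr[of a b z "Hyy a b *v z"] by simp
  finally show ?thesis by (simp add: power2_norm_eq_inner)
qed

lemma M_lower: "mu_g^2 * (norm z)^2 \<le> z \<bullet> (Mm a b *v z)"
proof -
  have "(mu_g * norm z)^2 \<le> (norm (Hyy a b *v z))^2"
    using H_lower[of z a b] mu_pos by (intro power_mono) auto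
  then show ?thesis unfolding M_quad by (simp add: power_mult_distrib add_increasing)
qed

lemma M_inv: "invertible (Mm a b)"
proof (rule inv_of_ker)
  fix z assume "Mm a b *v z = 0"
  then have "mu_g^2 * (norm z)^2 \<le> 0" using M_lower[of z a b] by simp
  then show "z = 0" using mu_pos by (simp add: mult_le_0_iff)
qed

lemma Minv_bound: "norm (matrix_inv (Mm a b) *v z) \<le> norm z / mu_g^2"
proof -
  let ?w = "matrix_inv (Mm a b) *v z"
  have "mu_g^2 * (norm ?w)^2 \<le> ?w \<bullet> z" using M_lower[of ?w a b] mv_inv[OF M_inv] by simp
  also have "\<dots> \<le> norm ?w * norm z" by (rule norm_cauchy_schwarz)
  finally have "(mu_g^2 * norm ?w) * norm ?w \<le> norm z * norm ?w" by (simp add: power2_eq_square algebra_simps)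
  then have "mu_g^2 * norm ?w \<le> norm z" by (cases "norm ?w = 0") (auto simp: mult_le_cancel_right)
  then show ?thesis using mu_pos by (simp add: le_divide_eq mult.commute)
qed

lemma norm_le_from_sq: "(norm x)^2 \<le> r^2 \<Longrightarrow> 0 \<le> r \<Longrightarrow> norm x \<le> r"
  using power2_le_imp_le by blast

lemma flow_pointwise:
  fixes \<alpha> :: real and a :: "real^'n" and b :: "real^'m"
  assumes \<alpha>: "\<alpha> > 0"
  defines "lam \<equiv> sgf_lambda \<alpha> fx fy gy Hyx Hyy a b"
  defines "xd \<equiv> - fx a b - transpose (Hyx a b) *v lam"
  defines "yd \<equiv> - fy a b - transpose (Hyy a b) *v lam"
  shows "Hyx a b *v xd + Hyy a b *v yd = - \<alpha> *\<^sub>R gy a b"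
    and "fx a b \<bullet> xd + fy a b \<bullet> yd \<le> - (1 / (1 + (Lyx / mu_g)^2)) * (norm (Fmap fx fy Hyx Hyy a b))^2
            + (Cfx + Cfy) * \<alpha> * norm (gy a b) / mu_g"
proof -
  define J where "J = Hyx a b"
  define H where "H = Hyy a b"
  define I where "I = matrix_inv (Mm a b)"
  define Hi where "Hi = matrix_inv H"
  define G where "G = gy a b"
  define p where "p = J *v fx a b + H *v fy a b"
  define l0 where "l0 = - (I *v p)"
  define w where "w = I *v G"
  have HT: "transpose H = H" unfolding H_def by (rule Hyy_sym)
  have Mv: "Mm a b *v z = J *v (transpose J *v z) + H *v (H *v z)" for z
    unfolding Mm_def J_def H_def by (simp add: matrix_vector_mult_add_rdistrib matrix_vector_mul_assoc)
  have MI: "Mm a b *v (I *v z) = z" for z unfolding I_def by (rule mv_inv[OF M_inv])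
  have lam: "lam = l0 + \<alpha> *\<^sub>R w"
    unfolding lam_def sgf_lambda_def l0_def w_def I_def Mm_def J_def H_def p_def G_def
    by (simp add: matrix_vector_mult_diff_distrib matrix_vector_mult_scaleR)
  define ux where "ux = fx a b + transpose J *v l0"
  define uy where "uy = fy a b + H *v l0"
  define qx where "qx = - \<alpha> *\<^sub>R (transpose J *v w)"
  define qy where "qy = - \<alpha> *\<^sub>R (H *v w)"
  have xd: "xd = - ux + qx" unfolding xd_def ux_def qx_def lam J_def
    by (simp add: matrix_vector_right_distrib matrix_vector_mult_scaleR algebra_simps)
  have yd: "yd = - uy + qy" unfolding yd_def uy_def qy_def lam H_def[symmetric] HT
    by (simp add: matrix_vector_right_distrib matrix_vector_mult_scaleR algebra_simps)
  have Ml0: "Mm a b *v l0 = - p" unfolding l0_def using MI by (simp add: mv_minus)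
  have key1: "J *v ux + H *v uy = 0"
  proof -
    have "J *v ux + H *v uy = p + (J *v (transpose J *v l0) + H *v (H *v l0))"
      unfolding ux_def uy_def p_def by (simp add: matrix_vector_right_distrib algebra_simps)
    also have "\<dots> = 0" using Ml0 Mv[of l0] by simp
    finally show ?thesis .
  qed
  show "Hyx a b *v xd + Hyy a b *v yd = - \<alpha> *\<^sub>R gy a b"
  proof -
    have "Hyx a b *v xd + Hyy a b *v yd = - (J *v ux + H *v uy) - \<alpha> *\<^sub>R (J *v (transpose J *v w) + H *v (H *v w))"
      unfolding xd yd qx_def qy_def J_def H_def
      by (simp add: matrix_vector_right_distrib matrix_vector_mult_scaleR algebra_simps)
    also have "\<dots> = - \<alpha> *\<^sub>R G" using key1 Mv[of w] MI[of G] unfolding w_def by simp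
    finally show ?thesis unfolding G_def .
  qed
  have key2: "fx a b \<bullet> ux + fy a b \<bullet> uy = (norm ux)^2 + (norm uy)^2"
  proof -
    have "fx a b \<bullet> ux = ux \<bullet> ux - l0 \<bullet> (J *v ux)"
      using tr_inner[of J l0 ux] unfolding ux_def by (simp add: inner_add_left)
    moreover have "fy a b \<bullet> uy = uy \<bullet> uy - l0 \<bullet> (H *v uy)"
      using Hyy_tr[of a b l0 uy] unfolding uy_def H_def by (simp add: inner_add_left)
    moreover have "l0 \<bullet> (J *v ux) + l0 \<bullet> (H *v uy) = 0" using key1 by (metis inner_add_right inner_zero_right)
    ultimately show ?thesis by (simp add: power2_norm_eq_inner)
  qed
  have key3: "(norm qx)^2 + (norm qy)^2 \<le> (\<alpha> * norm G / mu_g)^2"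
  proof -
    have "(norm qx)^2 + (norm qy)^2 = \<alpha>^2 * (w \<bullet> (Mm a b *v w))"
      unfolding qx_def qy_def M_quad J_def H_def by (simp add: power_mult_distrib distrib_left)
    also have "w \<bullet> (Mm a b *v w) = w \<bullet> G" unfolding w_def using MI by simp
    also have "\<alpha>^2 * (w \<bullet> G) \<le> \<alpha>^2 * (norm w * norm G)"
      by (intro mult_left_mono norm_cauchy_schwarz) simp
    also have "\<dots> \<le> \<alpha>^2 * ((norm G / mu_g^2) * norm G)"
      using Minv_bound[of a b G] unfolding w_def I_def
      by (intro mult_left_mono mult_right_mono) auto
    also have "\<dots> = (\<alpha> * norm G / mu_g)^2" by (simp add: power2_eq_square)
    finally show ?thesis .
  qed
  have nq: "norm qx \<le> \<alpha> * norm G / mu_g" "norm qy \<le> \<alpha> * norm G / mu_g"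
  proof -
    have nn: "0 \<le> \<alpha> * norm G / mu_g" using \<alpha> mu_pos by simp
    have "0 \<le> (norm qx)^2" "0 \<le> (norm qy)^2" by simp_all
    then have "(norm qx)^2 \<le> (\<alpha> * norm G / mu_g)^2" "(norm qy)^2 \<le> (\<alpha> * norm G / mu_g)^2"
      using key3 by linarith+
    then show "norm qx \<le> \<alpha> * norm G / mu_g" "norm qy \<le> \<alpha> * norm G / mu_g"
      using nn norm_le_from_sq by blast+
  qed
  have key4: "fx a b \<bullet> qx + fy a b \<bullet> qy \<le> (Cfx + Cfy) * \<alpha> * norm G / mu_g"
  proof -
    have "fx a b \<bullet> qx \<le> norm (fx a b) * norm qx" by (rule norm_cauchy_schwarz)
    also have "\<dots> \<le> Cfx * (\<alpha> * norm G / mu_g)"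
      using nq(1) fx_bound[of a b] Cfx_nonneg by (intro mult_mono) auto
    finally have 1: "fx a b \<bullet> qx \<le> Cfx * (\<alpha> * norm G / mu_g)" .
    have "fy a b \<bullet> qy \<le> norm (fy a b) * norm qy" by (rule norm_cauchy_schwarz)
    also have "\<dots> \<le> Cfy * (\<alpha> * norm G / mu_g)"
      using nq(2) fy_bound[of a b] Cfy_nonneg by (intro mult_mono) auto
    finally have 2: "fy a b \<bullet> qy \<le> Cfy * (\<alpha> * norm G / mu_g)" .
    have "(Cfx + Cfy) * \<alpha> * norm G / mu_g = Cfx * (\<alpha> * norm G / mu_g) + Cfy * (\<alpha> * norm G / mu_g)"
      by (simp add: algebra_simps add_divide_distrib)
    with 1 2 show ?thesis by linarith
  qed
  define F where "F = Fmap fx fy Hyx Hyy a b"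
  have F: "F = fx a b - transpose J *v (Hi *v fy a b)" unfolding F_def Fmap_def J_def Hi_def H_def ..
  define dy where "dy = - (Hi *v (J *v F))"
  have HHi: "H *v (Hi *v z) = z" for z unfolding H_def Hi_def by (rule mv_inv[OF H_inv])
  have key5: "ux \<bullet> F + uy \<bullet> dy = (norm F)^2"
  proof -
    have a1: "ux \<bullet> F = fx a b \<bullet> F + l0 \<bullet> (J *v F)"
      unfolding ux_def using tr_inner[of J l0 F] by (simp add: inner_add_left)
    have a2: "uy \<bullet> dy = fy a b \<bullet> dy - l0 \<bullet> (J *v F)"
      unfolding uy_def using Hyy_tr[of a b l0 dy] HHi[of "J *v F"]
      unfolding dy_def H_def[symmetric] by (simp add: inner_add_left mv_minus)
    have a3: "fx a b \<bullet> F = F \<bullet> F + (Hi *v fy a b) \<bullet> (J *v F)"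
    proof -
      have "fx a b = F + transpose J *v (Hi *v fy a b)" using F by simp
      then show ?thesis using tr_inner[of J "Hi *v fy a b" F] by (metis inner_add_left)
    qed
    have a4: "fy a b \<bullet> dy = - ((Hi *v fy a b) \<bullet> (J *v F))"
      unfolding dy_def Hi_def H_def using Hinv_sym[of a b "fy a b" "J *v F"] by simp
    show ?thesis using a1 a2 a3 a4 by (simp add: power2_norm_eq_inner)
  qed
  have ndy: "norm dy \<le> Lyx / mu_g * norm F"
  proof -
    have "norm dy \<le> norm (J *v F) / mu_g" unfolding dy_def Hi_def H_def using Hinv_bound by simp
    also have "\<dots> \<le> Lyx * norm F / mu_g" unfolding J_def
      using Hyx_bound mu_pos by (simp add: divide_right_mono)
    finally show ?thesis by simp
  qed
  define K where "K = Lyx / mu_g"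
  have K: "K \<ge> 0" unfolding K_def using Lyx_nonneg mu_pos by simp
  have key6: "(norm F)^2 \<le> (1 + K^2) * ((norm ux)^2 + (norm uy)^2)"
  proof -
    have "(norm F)^2 \<le> norm ux * norm F + norm uy * (K * norm F)"
    proof -
      have "(norm F)^2 = ux \<bullet> F + uy \<bullet> dy" using key5 by simp
      also have "\<dots> \<le> norm ux * norm F + norm uy * norm dy"
        using norm_cauchy_schwarz[of ux F] norm_cauchy_schwarz[of uy dy] by linarith
      also have "\<dots> \<le> norm ux * norm F + norm uy * (K * norm F)"
        using ndy unfolding K_def by (intro add_left_mono mult_left_mono) auto
      finally show ?thesis .
    qed
    then have "norm F * norm F \<le> (norm ux + K * norm uy) * norm F"
      by (simp add: power2_eq_square algebra_simps)
    then have "norm F \<le> norm ux + K * norm uy"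
      by (cases "norm F = 0") (use K in \<open>auto simp: mult_le_cancel_right\<close>)
    then have "(norm F)^2 \<le> (norm ux + K * norm uy)^2" by (intro power_mono) auto
    also have "\<dots> \<le> (1 + K^2) * ((norm ux)^2 + (norm uy)^2)"
    proof -
      have "0 \<le> (K * norm ux - norm uy)^2" by simp
      then show ?thesis by (simp add: power2_eq_square algebra_simps)
    qed
    finally show ?thesis .
  qed
  have c0: "(1 / (1 + K^2)) * (norm F)^2 \<le> (norm ux)^2 + (norm uy)^2"
  proof -
    have "1 + K^2 > 0" by (simp add: add_pos_nonneg)
    then show ?thesis using key6 by (simp add: divide_le_eq mult.commute)
  qed
  have "fx a b \<bullet> xd + fy a b \<bullet> yd = - (fx a b \<bullet> ux + fy a b \<bullet> uy) + (fx a b \<bullet> qx + fy a b \<bullet> qy)"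
    unfolding xd yd by (simp add: inner_add_right inner_diff_right)
  also have "\<dots> \<le> - (1 / (1 + K^2)) * (norm F)^2 + (Cfx + Cfy) * \<alpha> * norm G / mu_g"
    using key2 key4 c0 by linarith
  finally show "fx a b \<bullet> xd + fy a b \<bullet> yd \<le> - (1 / (1 + (Lyx / mu_g)^2)) * (norm (Fmap fx fy Hyx Hyy a b))^2
            + (Cfx + Cfy) * \<alpha> * norm (gy a b) / mu_g" unfolding K_def F_def G_def .
qed

end



lemma sq2: "(a + b)^2 \<le> 2*a^2 + 2*(b::real)^2"
proof -
  have "0 \<le> (a-b)^2" by simp
  then show ?thesis unfolding power2_sum power2_diff by linarith
qed

locale sgf_traj = sgf f g fx gx fy gy Hxx Hxy Hyx Hyy Cfx Cfy mu_g Lyy Lyx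
  for f g :: "real^'n \<Rightarrow> real^'m \<Rightarrow> real"
    and fx gx :: "real^'n \<Rightarrow> real^'m \<Rightarrow> real^'n"
    and fy gy :: "real^'n \<Rightarrow> real^'m \<Rightarrow> real^'m"
    and Hxx :: "real^'n \<Rightarrow> real^'m \<Rightarrow> real^'n^'n"
    and Hxy :: "real^'n \<Rightarrow> real^'m \<Rightarrow> real^'m^'n"
    and Hyx :: "real^'n \<Rightarrow> real^'m \<Rightarrow> real^'n^'m"
    and Hyy :: "real^'n \<Rightarrow> real^'m \<Rightarrow> real^'m^'m"
    and Cfx Cfy mu_g Lyy Lyx :: real +
  fixes \<alpha> :: real and x :: "real \<Rightarrow> real^'n" and y :: "real \<Rightarrow> real^'m"
  assumes Hyx_lip: "\<exists>L. L-lipschitz_on UNIV (\<lambda>p. Hyx (fst p) (snd p))"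
    and alpha_pos: "\<alpha> > 0"
    and x_ode: "\<And>t. t \<ge> 0 \<Longrightarrow> (x has_vector_derivative
          (- fx (x t) (y t) - transpose (Hyx (x t) (y t)) *v sgf_lambda \<alpha> fx fy gy Hyx Hyy (x t) (y t)))
          (at t within {0..})"
    and y_ode: "\<And>t. t \<ge> 0 \<Longrightarrow> (y has_vector_derivative
          (- fy (x t) (y t) - transpose (Hyy (x t) (y t)) *v sgf_lambda \<alpha> fx fy gy Hyx Hyy (x t) (y t)))
          (at t within {0..})"
begin

definition "xd t = - fx (x t) (y t) - transpose (Hyx (x t) (y t)) *v sgf_lambda \<alpha> fx fy gy Hyx Hyy (x t) (y t)"
definition "yd t = - fy (x t) (y t) - transpose (Hyy (x t) (y t)) *v sgf_lambda \<alpha> fx fy gy Hyx Hyy (x t) (y t)"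

lemma pair_traj_deriv: "t \<ge> 0 \<Longrightarrow> ((\<lambda>s. (x s, y s)) has_derivative (\<lambda>h. (h *\<^sub>R xd t, h *\<^sub>R yd t))) (at t within {0..})"
proof -
  assume t: "t \<ge> 0"
  have "(x has_derivative (\<lambda>h. h *\<^sub>R xd t)) (at t within {0..})"
    using x_ode[OF t] unfolding has_vector_derivative_def xd_def .
  moreover have "(y has_derivative (\<lambda>h. h *\<^sub>R yd t)) (at t within {0..})"
    using y_ode[OF t] unfolding has_vector_derivative_def yd_def .
  ultimately show ?thesis by (rule has_derivative_Pair)
qed

lemma G_deriv: "t \<ge> 0 \<Longrightarrow> ((\<lambda>s. gy (x s) (y s)) has_vector_derivative (- \<alpha> *\<^sub>R gy (x t) (y t))) (at t within {0..})"
proof -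
  assume t: "t \<ge> 0"
  from has_derivative_compose[OF pair_traj_deriv[OF t] gy_deriv[of "x t" "y t"]]
  have "((\<lambda>s. gy (x s) (y s)) has_derivative (\<lambda>h. Hyx (x t) (y t) *v (h *\<^sub>R xd t) + Hyy (x t) (y t) *v (h *\<^sub>R yd t))) (at t within {0..})"
    by (simp only: fst_conv snd_conv)
  moreover have "(\<lambda>h. Hyx (x t) (y t) *v (h *\<^sub>R xd t) + Hyy (x t) (y t) *v (h *\<^sub>R yd t)) = (\<lambda>h. h *\<^sub>R (- \<alpha> *\<^sub>R gy (x t) (y t)))"
  proof
    fix h :: real
    have "Hyx (x t) (y t) *v (h *\<^sub>R xd t) + Hyy (x t) (y t) *v (h *\<^sub>R yd t)
       = h *\<^sub>R (Hyx (x t) (y t) *v xd t + Hyy (x t) (y t) *v yd t)"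
      by (simp add: matrix_vector_mult_scaleR scaleR_add_right)
    also have "Hyx (x t) (y t) *v xd t + Hyy (x t) (y t) *v yd t = - \<alpha> *\<^sub>R gy (x t) (y t)"
      unfolding xd_def yd_def by (rule flow_pointwise(1)[OF alpha_pos])
    finally show "Hyx (x t) (y t) *v (h *\<^sub>R xd t) + Hyy (x t) (y t) *v (h *\<^sub>R yd t) = h *\<^sub>R (- \<alpha> *\<^sub>R gy (x t) (y t))" .
  qed
  ultimately show ?thesis unfolding has_vector_derivative_def by (simp only:)
qed

lemma part1: "t \<ge> 0 \<Longrightarrow> gy (x t) (y t) = exp (- \<alpha> * t) *\<^sub>R gy (x 0) (y 0)"
proof -
  assume t: "t \<ge> 0"
  have "\<exists>C. \<forall>s\<in>{0::real..}. exp (\<alpha> * s) *\<^sub>R gy (x s) (y s) = C"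
  proof (rule has_derivative_zero_constant)
    show "convex {0::real..}" by (rule convex_real_interval)
    fix s :: real assume "s \<in> {0..}"
    then have s: "s \<ge> 0" by simp
    have e: "((\<lambda>s. exp (\<alpha> * s)) has_real_derivative (exp (\<alpha> * s) * \<alpha>)) (at s within {0..})"
      by (auto intro!: derivative_eq_intros)
    have z: "exp (\<alpha> * s) *\<^sub>R (- \<alpha> *\<^sub>R gy (x s) (y s)) + (exp (\<alpha> * s) * \<alpha>) *\<^sub>R gy (x s) (y s) = 0"
      by (simp add: scaleR_scaleR)
    from has_vector_derivative_scaleR[OF e G_deriv[OF s]]
    have "((\<lambda>s. exp (\<alpha> * s) *\<^sub>R gy (x s) (y s)) has_vector_derivative 0) (at s within {0..})"
      unfolding z .
    then show "((\<lambda>s. exp (\<alpha> * s) *\<^sub>R gy (x s) (y s)) has_derivative (\<lambda>h. 0)) (at s within {0..})"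
      unfolding has_vector_derivative_def by simp
  qed
  then obtain C where C: "\<And>s. s \<ge> 0 \<Longrightarrow> exp (\<alpha> * s) *\<^sub>R gy (x s) (y s) = C" by auto
  have "gy (x t) (y t) = exp (- \<alpha> * t) *\<^sub>R (exp (\<alpha> * t) *\<^sub>R gy (x t) (y t))"
    by (simp add: exp_add[symmetric])
  also have "exp (\<alpha> * t) *\<^sub>R gy (x t) (y t) = gy (x 0) (y 0)" using C[OF t] C[of 0] by simp
  finally show ?thesis .
qed

lemma part1_norm: "t \<ge> 0 \<Longrightarrow> norm (gy (x t) (y t)) = exp (- \<alpha> * t) * norm (gy (x 0) (y 0))"
proof -
  assume t: "t \<ge> 0"
  show ?thesis unfolding part1[OF t] by simp
qed

lemma x_cont: "continuous_on {0..} x"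
  unfolding continuous_on_eq_continuous_within
  using has_vector_derivative_continuous[OF x_ode] by auto

lemma y_cont: "continuous_on {0..} y"
  unfolding continuous_on_eq_continuous_within
  using has_vector_derivative_continuous[OF y_ode] by auto

lemma comp_cont:
  assumes "continuous_on UNIV (\<lambda>p. \<Phi> (fst p) (snd p))"
  shows "continuous_on {0..} (\<lambda>s. \<Phi> (x s) (y s))"
proof -
  have "continuous_on {0..} (\<lambda>s. (x s, y s))" using x_cont y_cont by (rule continuous_on_Pair)
  from continuous_on_compose2[OF assms this] show ?thesis by simp
qed

lemma lip_cont: "\<exists>L. L-lipschitz_on UNIV \<Phi> \<Longrightarrow> continuous_on UNIV \<Phi>"
  using lipschitz_on_continuous_on by blast

lemma fx_c: "continuous_on {0..} (\<lambda>s. fx (x s) (y s))"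
  by (rule comp_cont[OF lip_cont[OF fx_lip]])
lemma fy_c: "continuous_on {0..} (\<lambda>s. fy (x s) (y s))"
  by (rule comp_cont[OF lip_cont[OF fy_lip]])
lemma Hyx_c: "continuous_on {0..} (\<lambda>s. Hyx (x s) (y s))"
  by (rule comp_cont[OF lip_cont[OF Hyx_lip]])
lemma Hyy_c: "continuous_on {0..} (\<lambda>s. Hyy (x s) (y s))"
  by (rule comp_cont[OF Hyy_cont])

definition "W s = matrix_inv (Hyy (x s) (y s)) *v fy (x s) (y s)"

lemma W_cont: "continuous_on {0..} W"
  unfolding continuous_on_def
proof
  fix t0 :: real assume t0: "t0 \<in> {0..}"
  let ?H = "\<lambda>s. Hyy (x s) (y s)" and ?fy = "\<lambda>s. fy (x s) (y s)"
  have HW: "?H s *v W s = ?fy s" for s unfolding W_def by (rule mv_inv[OF H_inv])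
  have bound: "norm (W s - W t0) \<le> (norm (?fy s - ?fy t0) + norm (?H s *v W t0 - ?H t0 *v W t0)) / mu_g" for s
  proof -
    have "?H s *v (W s - W t0) = (?fy s - ?fy t0) - (?H s *v W t0 - ?H t0 *v W t0)"
      using HW[of s] HW[of t0] by (simp add: matrix_vector_mult_diff_distrib)
    then have "mu_g * norm (W s - W t0) \<le> norm ((?fy s - ?fy t0) - (?H s *v W t0 - ?H t0 *v W t0))"
      using H_lower[of "W s - W t0" "x s" "y s"] by simp
    also have "\<dots> \<le> norm (?fy s - ?fy t0) + norm (?H s *v W t0 - ?H t0 *v W t0)" by (rule norm_triangle_ineq4)
    finally show ?thesis using mu_pos by (simp add: le_divide_eq mult.commute)
  qed
  have t1: "(?fy \<longlongrightarrow> ?fy t0) (at t0 within {0..})" using fy_c t0 unfolding continuous_on_def by blast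
  have "continuous_on {0..} (\<lambda>s. ?H s *v W t0)" by (rule cont_mv[OF Hyy_c])
  then have t2: "((\<lambda>s. ?H s *v W t0) \<longlongrightarrow> ?H t0 *v W t0) (at t0 within {0..})" using t0 unfolding continuous_on_def by blast
  have "((\<lambda>s. (norm (?fy s - ?fy t0) + norm (?H s *v W t0 - ?H t0 *v W t0)) / mu_g) \<longlongrightarrow>
          (norm (?fy t0 - ?fy t0) + norm (?H t0 *v W t0 - ?H t0 *v W t0)) / mu_g) (at t0 within {0..})"
    using mu_pos by (intro tendsto_intros t1 t2) auto
  then have "((\<lambda>s. (norm (?fy s - ?fy t0) + norm (?H s *v W t0 - ?H t0 *v W t0)) / mu_g) \<longlongrightarrow> 0) (at t0 within {0..})"
    by simp
  then have "((\<lambda>s. W s - W t0) \<longlongrightarrow> 0) (at t0 within {0..})"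
    by (rule Lim_null_comparison[rotated]) (use bound in auto)
  then show "(W \<longlongrightarrow> W t0) (at t0 within {0..})" by (subst Lim_null)
qed

definition "Fn s = (norm (Fmap fx fy Hyx Hyy (x s) (y s)))^2"

lemma Fn_cont: "continuous_on {0..} Fn"
proof -
  have "(\<lambda>s. Fmap fx fy Hyx Hyy (x s) (y s)) = (\<lambda>s. fx (x s) (y s) - transpose (Hyx (x s) (y s)) *v W s)"
    unfolding Fmap_def W_def by simp
  moreover have "continuous_on {0..} (\<lambda>s. fx (x s) (y s) - transpose (Hyx (x s) (y s)) *v W s)"
    by (intro continuous_intros fx_c cont_mv2 cont_tr Hyx_c W_cont)
  ultimately have "continuous_on {0..} (\<lambda>s. Fmap fx fy Hyx Hyy (x s) (y s))" by (simp only:)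
  then show ?thesis unfolding Fn_def[abs_def] by (intro continuous_intros)
qed

lemma int_deriv: "t \<ge> 0 \<Longrightarrow> ((\<lambda>t. integral {0..t} Fn) has_real_derivative Fn t) (at t within {0..})"
proof -
  assume t: "t \<ge> 0"
  have c: "continuous_on {0..t+1} Fn" using Fn_cont by (rule continuous_on_subset) auto
  have "((\<lambda>u. integral {0..u} Fn) has_vector_derivative Fn t) (at t within {0..t+1})"
    by (rule integral_has_vector_derivative[OF c]) (use t in auto)
  moreover have "at t within {0..t+1} = at t within {0..}"
    by (rule at_within_nhd[of _ "{t-1<..<t+1}"]) auto
  ultimately show ?thesis by (simp add: has_real_derivative_iff_has_vector_derivative)
qed

definition "c0 = 1 / (1 + (Lyx / mu_g)^2)"
definition "b0 = (Cfx + Cfy) / mu_g + 1"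

lemma c0_pos: "c0 > 0" unfolding c0_def by (simp add: add_pos_nonneg)
lemma b0_pos: "b0 > 0" unfolding b0_def using Cfx_nonneg Cfy_nonneg mu_pos by (simp add: add_nonneg_pos)

definition "Nn s = norm (gy (x s) (y s))"

lemma f_traj_deriv: "t \<ge> 0 \<Longrightarrow> ((\<lambda>s. f (x s) (y s)) has_real_derivative (fx (x t) (y t) \<bullet> xd t + fy (x t) (y t) \<bullet> yd t)) (at t within {0..})"
proof -
  assume t: "t \<ge> 0"
  from has_derivative_compose[OF pair_traj_deriv[OF t] f_deriv[of "x t" "y t"]]
  have "((\<lambda>s. f (x s) (y s)) has_derivative (\<lambda>h. fx (x t) (y t) \<bullet> (h *\<^sub>R xd t) + fy (x t) (y t) \<bullet> (h *\<^sub>R yd t))) (at t within {0..})"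
    by (simp only: fst_conv snd_conv)
  then show ?thesis unfolding has_field_derivative_def
    by (rule has_derivative_eq_rhs) (simp add: fun_eq_iff algebra_simps)
qed

lemma N_deriv: "t \<ge> 0 \<Longrightarrow> (Nn has_real_derivative (- \<alpha> * Nn t)) (at t within {0..})"
proof -
  assume t: "t \<ge> 0"
  have d0: "((\<lambda>s. exp (- \<alpha> * s) * Nn 0) has_real_derivative (exp (- \<alpha> * t) * (- \<alpha>) * Nn 0)) (at t within {0..})"
    by (auto intro!: derivative_eq_intros)
  have eq: "exp (- \<alpha> * t) * (- \<alpha>) * Nn 0 = - \<alpha> * Nn t"
    unfolding Nn_def part1_norm[OF t] by simp
  note d = d0[unfolded eq]
  show ?thesis
  proof (rule has_field_derivative_transform_within[OF d zero_less_one])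
    show "t \<in> {0..}" using t by simp
    fix s :: real assume "s \<in> {0..}"
    then have s: "s \<ge> 0" by simp
    show "exp (- \<alpha> * s) * Nn 0 = Nn s" unfolding Nn_def part1_norm[OF s] by simp
  qed
qed

definition "En fs t = f (x t) (y t) - fs + b0 * Nn t + c0 * integral {0..t} Fn"

lemma E_deriv: "t \<ge> 0 \<Longrightarrow> \<exists>D. (En fs has_real_derivative D) (at t within {0..}) \<and> D \<le> 0"
proof -
  assume t: "t \<ge> 0"
  let ?A = "fx (x t) (y t) \<bullet> xd t + fy (x t) (y t) \<bullet> yd t"
  have d: "(En fs has_real_derivative (?A - 0 + b0 * (- \<alpha> * Nn t) + c0 * Fn t)) (at t within {0..})"
    unfolding En_def[abs_def]
    by (intro DERIV_add DERIV_diff DERIV_cmult f_traj_deriv N_deriv int_deriv t DERIV_const)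
  have A: "?A \<le> - c0 * Fn t + (Cfx + Cfy) * \<alpha> * Nn t / mu_g"
    unfolding xd_def yd_def c0_def Fn_def Nn_def by (rule flow_pointwise(2)[OF alpha_pos])
  have "?A - 0 + b0 * (- \<alpha> * Nn t) + c0 * Fn t \<le> (Cfx + Cfy) * \<alpha> * Nn t / mu_g - b0 * \<alpha> * Nn t"
    using A by simp
  also have "\<dots> = - \<alpha> * Nn t" unfolding b0_def using mu_pos by (simp add: field_simps)
  also have "\<dots> \<le> 0" using alpha_pos Nn_def by simp
  finally show ?thesis using d by blast
qed

lemma E_cont: "continuous_on {0..} (En fs)"
  unfolding continuous_on_eq_continuous_within
  using E_deriv DERIV_continuous by fastforce

lemma E_mono: assumes t: "t \<ge> 0" shows "En fs t \<le> En fs 0"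
proof (rule DERIV_nonpos_imp_decreasing_open[of 0 t "En fs"])
  show "0 \<le> t" by (rule t)
next
  fix s :: real assume s: "0 < s" "s < t"
  obtain D where D: "(En fs has_real_derivative D) (at s within {0..})" "D \<le> 0" using E_deriv[of s fs] s by auto
  have "at s within {0..} = at s" by (rule at_within_interior) (use s in auto)
  then show "\<exists>y. (En fs has_real_derivative y) (at s) \<and> y \<le> 0" using D by auto
next
  show "continuous_on {0..t} (En fs)" using E_cont by (rule continuous_on_subset) auto
qed

lemma Fn_int: "Fn integrable_on {0..t}"
  using Fn_cont by (intro integrable_continuous_real) (rule continuous_on_subset, auto)

lemma E_lower:
  assumes bdd: "bdd_below {f a b | a b. gy a b = 0}" and t: "t \<ge> 0"
  shows "c0 * integral {0..t} Fn \<le> En (Inf {f a b | a b. gy a b = 0}) t"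
proof -
  have "Inf {f a b | a b. gy a b = 0} - Cfy / mu_g * Nn t \<le> f (x t) (y t)"
    unfolding Nn_def by (rule f_lower[OF bdd])
  moreover have "Cfy / mu_g * Nn t \<le> b0 * Nn t"
    unfolding b0_def Nn_def using Cfx_nonneg mu_pos
    by (intro mult_right_mono) (auto simp: field_simps)
  ultimately show ?thesis unfolding En_def by simp
qed

lemma exp_int: "t \<ge> 0 \<Longrightarrow> integral {0..t} (\<lambda>s. exp (- 2 * \<alpha> * s)) = (1 - exp (- 2 * \<alpha> * t)) / (2 * \<alpha>)"
proof -
  assume t: "t \<ge> 0"
  have "((\<lambda>s. exp (- 2 * \<alpha> * s)) has_integral ((- exp (- 2 * \<alpha> * t) / (2 * \<alpha>)) - (- exp (- 2 * \<alpha> * 0) / (2 * \<alpha>)))) {0..t}"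
  proof (rule fundamental_theorem_of_calculus[OF t])
    fix s assume "s \<in> {0..t}"
    have "((\<lambda>s. - exp (- 2 * \<alpha> * s) / (2 * \<alpha>)) has_real_derivative (- (exp (- 2 * \<alpha> * s) * (- 2 * \<alpha>)) / (2 * \<alpha>))) (at s within {0..t})"
      by (auto intro!: derivative_eq_intros)
    moreover have "- (exp (- 2 * \<alpha> * s) * (- 2 * \<alpha>)) / (2 * \<alpha>) = exp (- 2 * \<alpha> * s)"
      using alpha_pos by simp
    ultimately show "((\<lambda>s. - exp (- 2 * \<alpha> * s) / (2 * \<alpha>)) has_vector_derivative exp (- 2 * \<alpha> * s)) (at s within {0..t})"
      by (simp add: has_real_derivative_iff_has_vector_derivative)
  qed
  then show ?thesis by (simp add: integral_unique diff_divide_distrib add.commute)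
qed

lemma final_ineq:
  fixes M1 :: real
  assumes bdd: "bdd_below {f a b | a b. gy a b = 0}" and M1_pos: "M1 > 0"
    and M1: "\<And>a b. norm (grad (\<lambda>u. f u (ystar g u)) a - Fmap fx fy Hyx Hyy a b) \<le> M1 * norm (b - ystar g a)"
    and t: "t > 0"
  defines "fs \<equiv> Inf {f a b | a b. gy a b = 0}"
  shows "(1 / t) * integral {0..t} (\<lambda>\<tau>. (norm (grad (\<lambda>u. f u (ystar g u)) (x \<tau>)))\<^sup>2)
           \<le> 2 * En fs 0 / (c0 * t)
             + (1 - exp (- 2 * \<alpha> * t)) / (\<alpha> * t) * (M1\<^sup>2 / mu_g\<^sup>2) * (norm (gy (x 0) (y 0)))\<^sup>2"
proof -
  define Gn where "Gn \<tau> = (norm (grad (\<lambda>u. f u (ystar g u)) (x \<tau>)))\<^sup>2" for \<tau>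
  define n0 where "n0 = norm (gy (x 0) (y 0))"
  define K where "K = (M1 / mu_g)^2 * n0^2"
  define B where "B \<tau> = 2 * Fn \<tau> + 2 * K * exp (- 2 * \<alpha> * \<tau>)" for \<tau>
  have K: "K \<ge> 0" unfolding K_def by simp
  have GB: "Gn \<tau> \<le> B \<tau>" if \<tau>: "\<tau> \<in> {0..t}" for \<tau>
  proof -
    let ?gr = "grad (\<lambda>u. f u (ystar g u)) (x \<tau>)"
    let ?F = "Fmap fx fy Hyx Hyy (x \<tau>) (y \<tau>)"
    have t0: "\<tau> \<ge> 0" using \<tau> by simp
    have "norm ?gr \<le> norm (?gr - ?F) + norm ?F" using norm_triangle_ineq[of "?gr - ?F" ?F] by simp
    also have "norm (?gr - ?F) \<le> M1 * norm (y \<tau> - ystar g (x \<tau>))" by (rule M1)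
    also have "M1 * norm (y \<tau> - ystar g (x \<tau>)) \<le> M1 * (Nn \<tau> / mu_g)"
      using mult_left_mono[OF dist_ystar[of "y \<tau>" "x \<tau>"], of M1] M1_pos unfolding Nn_def by simp
    also have "Nn \<tau> = exp (- \<alpha> * \<tau>) * n0" unfolding Nn_def n0_def by (rule part1_norm[OF t0])
    finally have le: "norm ?gr \<le> M1 * (exp (- \<alpha> * \<tau>) * n0 / mu_g) + norm ?F" by simp
    have b0: "0 \<le> M1 * (exp (- \<alpha> * \<tau>) * n0 / mu_g)" using M1_pos mu_pos unfolding n0_def by simp
    have "Gn \<tau> \<le> (M1 * (exp (- \<alpha> * \<tau>) * n0 / mu_g) + norm ?F)^2"
      unfolding Gn_def using le by (intro power_mono) auto
    also have "\<dots> \<le> 2 * (M1 * (exp (- \<alpha> * \<tau>) * n0 / mu_g))^2 + 2 * (norm ?F)^2"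
      by (rule sq2)
    also have "(M1 * (exp (- \<alpha> * \<tau>) * n0 / mu_g))^2 = K * exp (- 2 * \<alpha> * \<tau>)"
    proof -
      have "(exp (- \<alpha> * \<tau>))^2 = exp (- 2 * \<alpha> * \<tau>)"
        by (simp add: power2_eq_square exp_add[symmetric])
      then show ?thesis unfolding K_def by (simp add: power_mult_distrib power_divide)
    qed
    finally show ?thesis unfolding B_def Fn_def by simp
  qed
  have E0: "0 \<le> En fs 0" using E_lower[OF bdd, of 0] unfolding fs_def by simp
  have IF: "integral {0..t} Fn \<le> En fs 0 / c0"
  proof -
    have "c0 * integral {0..t} Fn \<le> En fs 0"
      using E_lower[OF bdd, of t] E_mono[of t fs] t unfolding fs_def by simp
    then show ?thesis using c0_pos by (simp add: le_divide_eq mult.commute)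
  qed
  have eint: "(\<lambda>s. exp (- 2 * \<alpha> * s)) integrable_on {0..t}"
    by (intro integrable_continuous_real continuous_intros)
  have Fc: "continuous_on {0..t} Fn" using Fn_cont by (rule continuous_on_subset) auto
  have Bint: "B integrable_on {0..t}" unfolding B_def
    by (intro integrable_continuous_real continuous_intros Fc)
  have rhs0: "0 \<le> 2 * En fs 0 / (c0 * t) + (1 - exp (- 2 * \<alpha> * t)) / (\<alpha> * t) * (M1\<^sup>2 / mu_g\<^sup>2) * n0\<^sup>2"
    using E0 c0_pos t alpha_pos mu_pos by (intro add_nonneg_nonneg mult_nonneg_nonneg divide_nonneg_pos) auto
  show ?thesis
  proof (cases "Gn integrable_on {0..t}")
    case False
    then show ?thesis using rhs0 unfolding Gn_def[abs_def] n0_def by (simp add: not_integrable_integral)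
  next
    case True
    have "integral {0..t} Gn \<le> integral {0..t} B" using True Bint GB by (rule integral_le)
    also have "integral {0..t} B = 2 * integral {0..t} Fn + 2 * K * ((1 - exp (- 2 * \<alpha> * t)) / (2 * \<alpha>))"
    proof -
      have i1: "(\<lambda>\<tau>. 2 * Fn \<tau>) integrable_on {0..t}" by (intro integrable_continuous_real continuous_intros Fc)
      have i2: "(\<lambda>\<tau>. 2 * K * exp (- 2 * \<alpha> * \<tau>)) integrable_on {0..t}" by (intro integrable_continuous_real continuous_intros)
      have "integral {0..t} B = integral {0..t} (\<lambda>\<tau>. 2 * Fn \<tau>) + integral {0..t} (\<lambda>\<tau>. 2 * K * exp (- 2 * \<alpha> * \<tau>))"
        unfolding B_def by (rule integral_add[OF i1 i2])
      also have "integral {0..t} (\<lambda>\<tau>. 2 * Fn \<tau>) = 2 * integral {0..t} Fn" by (rule integral_mult_right)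
      also have "integral {0..t} (\<lambda>\<tau>. 2 * K * exp (- 2 * \<alpha> * \<tau>)) = 2 * K * integral {0..t} (\<lambda>\<tau>. exp (- 2 * \<alpha> * \<tau>))"
        by (rule integral_mult_right)
      finally show ?thesis using exp_int[of t] t by simp
    qed
    also have "\<dots> \<le> 2 * (En fs 0 / c0) + 2 * K * ((1 - exp (- 2 * \<alpha> * t)) / (2 * \<alpha>))"
      using IF by simp
    finally have I: "integral {0..t} Gn \<le> 2 * (En fs 0 / c0) + K * (1 - exp (- 2 * \<alpha> * t)) / \<alpha>"
      using alpha_pos by simp
    have "(1 / t) * integral {0..t} Gn \<le> (1 / t) * (2 * (En fs 0 / c0) + K * (1 - exp (- 2 * \<alpha> * t)) / \<alpha>)"
      using I t by (intro mult_left_mono) auto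
    also have "\<dots> = 2 * En fs 0 / (c0 * t) + (1 - exp (- 2 * \<alpha> * t)) / (\<alpha> * t) * (M1\<^sup>2 / mu_g\<^sup>2) * n0\<^sup>2"
      unfolding K_def using t alpha_pos c0_pos mu_pos by (simp add: field_simps power_divide)
    finally show ?thesis unfolding Gn_def[abs_def] n0_def .
  qed
qed

end

context sgf_traj
begin
lemma main:
  fixes M1 :: real
  assumes bdd: "bdd_below {f a b | a b. gy a b = 0}" and M1_pos: "M1 > 0"
    and M1: "\<And>a b. norm (grad (\<lambda>u. f u (ystar g u)) a - Fmap fx fy Hyx Hyy a b) \<le> M1 * norm (b - ystar g a)"
  shows
    "(\<forall>t\<ge>0. norm (gy (x t) (y t)) = exp (- \<alpha> * t) * norm (gy (x 0) (y 0))) \<and>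
     (let fstar = Inf {f a b | a b. gy a b = 0} in
      \<exists>\<beta> c. \<beta> > 0 \<and> c > 0 \<and>
        (let E = (\<lambda>t. f (x t) (y t) - fstar + \<beta> * norm (gy (x t) (y t))
                      + c * integral {0..t} (\<lambda>\<tau>. (norm (Fmap fx fy Hyx Hyy (x \<tau>) (y \<tau>)))\<^sup>2))
         in (\<forall>t\<ge>0. \<exists>D. (E has_real_derivative D) (at t within {0..}) \<and> D \<le> 0) \<and>
            (\<forall>t>0. (1 / t) * integral {0..t} (\<lambda>\<tau>. (norm (grad (\<lambda>u. f u (ystar g u)) (x \<tau>)))\<^sup>2)
                 \<le> 2 * E 0 / (c * t)
                   + (1 - exp (- 2 * \<alpha> * t)) / (\<alpha> * t) * (M1\<^sup>2 / mu_g\<^sup>2)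
                     * (norm (gy (x 0) (y 0)))\<^sup>2)))"
proof -
  define fs where "fs = Inf {f a b | a b. gy a b = 0}"
  have Eeq: "(\<lambda>t. f (x t) (y t) - fs + b0 * norm (gy (x t) (y t))
                      + c0 * integral {0..t} (\<lambda>\<tau>. (norm (Fmap fx fy Hyx Hyy (x \<tau>) (y \<tau>)))\<^sup>2)) = En fs"
    by (simp add: fun_eq_iff En_def Nn_def Fn_def[abs_def])
  have P2: "(\<forall>t\<ge>0. \<exists>D. (En fs has_real_derivative D) (at t within {0..}) \<and> D \<le> 0) \<and>
            (\<forall>t>0. (1 / t) * integral {0..t} (\<lambda>\<tau>. (norm (grad (\<lambda>u. f u (ystar g u)) (x \<tau>)))\<^sup>2)
                 \<le> 2 * En fs 0 / (c0 * t)
                   + (1 - exp (- 2 * \<alpha> * t)) / (\<alpha> * t) * (M1\<^sup>2 / mu_g\<^sup>2)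
                     * (norm (gy (x 0) (y 0)))\<^sup>2)"
    using E_deriv final_ineq[OF bdd M1_pos M1] unfolding fs_def by auto
  show ?thesis
    unfolding Let_def fs_def[symmetric]
    using part1_norm P2 b0_pos c0_pos unfolding Eeq[symmetric]
    by blast
qed
end

theorem theorem1:
  fixes f g :: "real^'n \<Rightarrow> real^'m \<Rightarrow> real"
    and fx gx :: "real^'n \<Rightarrow> real^'m \<Rightarrow> real^'n"
    and fy gy :: "real^'n \<Rightarrow> real^'m \<Rightarrow> real^'m"
    and Hxx :: "real^'n \<Rightarrow> real^'m \<Rightarrow> real^'n^'n"
    and Hxy :: "real^'n \<Rightarrow> real^'m \<Rightarrow> real^'m^'n"
    and Hyx :: "real^'n \<Rightarrow> real^'m \<Rightarrow> real^'n^'m"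
    and Hyy :: "real^'n \<Rightarrow> real^'m \<Rightarrow> real^'m^'m"
    and Cfx Cfy mu_g Lyy Lyx M1 \<alpha> :: real
    and x :: "real \<Rightarrow> real^'n" and y :: "real \<Rightarrow> real^'m"
  assumes
    \<comment> \<open>A1: f continuously differentiable with gradient (fx, fy), bounded and Lipschitz\<close>
    f_deriv: "\<And>a b. ((\<lambda>p. f (fst p) (snd p)) has_derivative
                 (\<lambda>h. fx a b \<bullet> fst h + fy a b \<bullet> snd h)) (at (a, b))"
    and fx_bound: "\<And>a b. norm (fx a b) \<le> Cfx"
    and fy_bound: "\<And>a b. norm (fy a b) \<le> Cfy"
    and fx_lip: "\<exists>L. L-lipschitz_on UNIV (\<lambda>p. fx (fst p) (snd p))"
    and fy_lip: "\<exists>L. L-lipschitz_on UNIV (\<lambda>p. fy (fst p) (snd p))"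
    \<comment> \<open>A2: g twice continuously differentiable with gradient (gx, gy) and Hessian blocks\<close>
    and g_deriv: "\<And>a b. ((\<lambda>p. g (fst p) (snd p)) has_derivative
                 (\<lambda>h. gx a b \<bullet> fst h + gy a b \<bullet> snd h)) (at (a, b))"
    and gx_deriv: "\<And>a b. ((\<lambda>p. gx (fst p) (snd p)) has_derivative
                 (\<lambda>h. Hxx a b *v fst h + Hxy a b *v snd h)) (at (a, b))"
    and gy_deriv: "\<And>a b. ((\<lambda>p. gy (fst p) (snd p)) has_derivative
                 (\<lambda>h. Hyx a b *v fst h + Hyy a b *v snd h)) (at (a, b))"
    and Hxx_cont: "continuous_on UNIV (\<lambda>p. Hxx (fst p) (snd p))"
    and Hxy_cont: "continuous_on UNIV (\<lambda>p. Hxy (fst p) (snd p))"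
    and Hyx_cont: "continuous_on UNIV (\<lambda>p. Hyx (fst p) (snd p))"
    and Hyy_cont: "continuous_on UNIV (\<lambda>p. Hyy (fst p) (snd p))"
    and g_sc: "strongly_convex_y mu_g g"
    and gy_lip_y: "\<And>a. Lyy-lipschitz_on UNIV (gy a)"
    and gy_lip_x: "\<And>b. Lyx-lipschitz_on UNIV (\<lambda>a. gy a b)"
    and Hyx_lip: "\<exists>L. L-lipschitz_on UNIV (\<lambda>p. Hyx (fst p) (snd p))"
    and Hyy_lip: "\<exists>L. L-lipschitz_on UNIV (\<lambda>p. Hyy (fst p) (snd p))"
    \<comment> \<open>the constant M1 of Lemma 1\<close>
    and M1_pos: "M1 > 0"
    and M1: "\<And>a b. norm (grad (\<lambda>u. f u (ystar g u)) a - Fmap fx fy Hyx Hyy a b)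
                 \<le> M1 * norm (b - ystar g a)"
    \<comment> \<open>f* is finite\<close>
    and fstar_fin: "bdd_below {f a b | a b. gy a b = 0}"
    and alpha_pos: "\<alpha> > 0"
    \<comment> \<open>(x,y) solves the safe gradient flow on [0,\<infinity>)\<close>
    and x_ode: "\<And>t. t \<ge> 0 \<Longrightarrow> (x has_vector_derivative
          (- fx (x t) (y t) - transpose (Hyx (x t) (y t)) *v sgf_lambda \<alpha> fx fy gy Hyx Hyy (x t) (y t)))
          (at t within {0..})"
    and y_ode: "\<And>t. t \<ge> 0 \<Longrightarrow> (y has_vector_derivative
          (- fy (x t) (y t) - transpose (Hyy (x t) (y t)) *v sgf_lambda \<alpha> fx fy gy Hyx Hyy (x t) (y t)))
          (at t within {0..})"
  shows
    "(\<forall>t\<ge>0. norm (gy (x t) (y t)) = exp (- \<alpha> * t) * norm (gy (x 0) (y 0))) \<and>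
     (let fstar = Inf {f a b | a b. gy a b = 0} in
      \<exists>\<beta> c. \<beta> > 0 \<and> c > 0 \<and>
        (let E = (\<lambda>t. f (x t) (y t) - fstar + \<beta> * norm (gy (x t) (y t))
                      + c * integral {0..t} (\<lambda>\<tau>. (norm (Fmap fx fy Hyx Hyy (x \<tau>) (y \<tau>)))\<^sup>2))
         in (\<forall>t\<ge>0. \<exists>D. (E has_real_derivative D) (at t within {0..}) \<and> D \<le> 0) \<and>
            (\<forall>t>0. (1 / t) * integral {0..t} (\<lambda>\<tau>. (norm (grad (\<lambda>u. f u (ystar g u)) (x \<tau>)))\<^sup>2)
                 \<le> 2 * E 0 / (c * t)
                   + (1 - exp (- 2 * \<alpha> * t)) / (\<alpha> * t) * (M1\<^sup>2 / mu_g\<^sup>2)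
                     * (norm (gy (x 0) (y 0)))\<^sup>2)))"
proof -
  interpret T: sgf_traj f g fx gx fy gy Hxx Hxy Hyx Hyy Cfx Cfy mu_g Lyy Lyx \<alpha> x y
    by unfold_locales (fact assms)+
  show ?thesis by (rule T.main[OF fstar_fin M1_pos M1])
qed

end
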